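(* Let $(X,\mathcal U)$ be a non-archimedean metrizable non-discrete uniform space. Then $A_{NA}(X,\mathcal U)$ is not complete.
   Context: A uniform space is non-archimedean if its (Hausdorff) uniformity has a base of equivalence relations; it is discrete if the diagonal is an entourage. $A_{NA}(X,\mathcal U)$ is the free abelian non-archimedean group of $(X,\mathcal U)$: an abelian Hausdorff topological group with a local base at $0$ of open subgroups, together with a uniformly continuous map $i\colon X\to A_{NA}$ such that every uniformly continuous map from $X$ into an abelian non-archimedean group factors uniquely as a continuous homomorphism composed with $i$. Complete means complete with respect to the group's uniformity. *)

theory Defs
  imports "HOL-Analysis.Analysis" "HOL-Library.Poly_Mapping"
begin

text \<open>The underlying set X of the uniform space is the universe of the type 'a;
  the uniformity is the filter U of entourages on 'a \<times> 'a.\<close>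

definition entourage :: "('a \<times> 'a) filter \<Rightarrow> ('a \<times> 'a) set \<Rightarrow> bool" where
  "entourage U E \<longleftrightarrow> eventually (\<lambda>p. p \<in> E) U"

definition uniformity_axioms :: "('a \<times> 'a) filter \<Rightarrow> bool" where
  "uniformity_axioms U \<longleftrightarrow>
     (\<forall>E. entourage U E \<longrightarrow> Id \<subseteq> E) \<and>
     (\<forall>E. entourage U E \<longrightarrow> entourage U (E\<inverse>)) \<and>
     (\<forall>E. entourage U E \<longrightarrow> (\<exists>D. entourage U D \<and> D O D \<subseteq> E))"

definition hausdorff_uniformity :: "('a \<times> 'a) filter \<Rightarrow> bool" where
  "hausdorff_uniformity U \<longleftrightarrow> (\<forall>x y. (\<forall>E. entourage U E \<longrightarrow> (x, y) \<in> E) \<longrightarrow> x = y)"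

definition uniform_space_on :: "('a \<times> 'a) filter \<Rightarrow> bool" where
  "uniform_space_on U \<longleftrightarrow> uniformity_axioms U \<and> hausdorff_uniformity U"

definition non_archimedean :: "('a \<times> 'a) filter \<Rightarrow> bool" where
  "non_archimedean U \<longleftrightarrow>
     (\<forall>E. entourage U E \<longrightarrow> (\<exists>R. equiv UNIV R \<and> entourage U R \<and> R \<subseteq> E))"

definition discrete_uniformity :: "('a \<times> 'a) filter \<Rightarrow> bool" where
  "discrete_uniformity U \<longleftrightarrow> entourage U Id"

definition is_metric :: "('a \<Rightarrow> 'a \<Rightarrow> real) \<Rightarrow> bool" where
  "is_metric d \<longleftrightarrow>
     (\<forall>x y. 0 \<le> d x y) \<and> (\<forall>x y. d x y = 0 \<longleftrightarrow> x = y) \<and>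
     (\<forall>x y. d x y = d y x) \<and> (\<forall>x y z. d x z \<le> d x y + d y z)"

definition metrizable_uniformity :: "('a \<times> 'a) filter \<Rightarrow> bool" where
  "metrizable_uniformity U \<longleftrightarrow>
     (\<exists>d. is_metric d \<and> U = (INF e\<in>{0<..}. principal {(x, y). d x y < e}))"

text \<open>Underlying group: the free abelian group on X, i.e. finitely supported
  functions 'a =>0 int, with insertion of generators
  i x = Poly_Mapping.single x 1.  Its topology is the finest non-archimedean group
  topology making i uniformly continuous: the neighbourhoods of 0 have as base all
  subgroups H of the free abelian group such that {(x,y). i x - i y \<in> H} is an
  entourage of U.  This is the standard construction of A_NA(X,U), which satisfies
  the universal property in the context.\<close>

definition free_gen :: "'a \<Rightarrow> ('a \<Rightarrow>\<^sub>0 int)" where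
  "free_gen x = Poly_Mapping.single x 1"

definition is_subgroup :: "('g::ab_group_add) set \<Rightarrow> bool" where
  "is_subgroup H \<longleftrightarrow> 0 \<in> H \<and> (\<forall>a\<in>H. \<forall>b\<in>H. a - b \<in> H)"

definition ANA_nbhd_subgroups :: "('a \<times> 'a) filter \<Rightarrow> ('a \<Rightarrow>\<^sub>0 int) set set" where
  "ANA_nbhd_subgroups U =
     {H. is_subgroup H \<and> entourage U {(x, y). free_gen x - free_gen y \<in> H}}"

definition ANA_open :: "('a \<times> 'a) filter \<Rightarrow> ('a \<Rightarrow>\<^sub>0 int) set \<Rightarrow> bool" where
  "ANA_open U S \<longleftrightarrow> (\<forall>a\<in>S. \<exists>H\<in>ANA_nbhd_subgroups U. (\<lambda>h. a + h) ` H \<subseteq> S)"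

text \<open>The group uniformity of A_NA(X,U) has as base the sets
  {(a,b). b - a \<in> H} for H in the base of open subgroups at 0.
  Completeness: every proper Cauchy filter converges.\<close>

definition ANA_cauchy :: "('a \<times> 'a) filter \<Rightarrow> ('a \<Rightarrow>\<^sub>0 int) filter \<Rightarrow> bool" where
  "ANA_cauchy U F \<longleftrightarrow> F \<noteq> bot \<and>
     (\<forall>H\<in>ANA_nbhd_subgroups U. eventually (\<lambda>(a, b). b - a \<in> H) (F \<times>\<^sub>F F))"

definition ANA_converges_to :: "('a \<times> 'a) filter \<Rightarrow> ('a \<Rightarrow>\<^sub>0 int) filter \<Rightarrow> ('a \<Rightarrow>\<^sub>0 int) \<Rightarrow> bool" where
  "ANA_converges_to U F c \<longleftrightarrow>
     (\<forall>H\<in>ANA_nbhd_subgroups U. eventually (\<lambda>b. b - c \<in> H) F)"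

definition ANA_complete :: "('a \<times> 'a) filter \<Rightarrow> bool" where
  "ANA_complete U \<longleftrightarrow> (\<forall>F. ANA_cauchy U F \<longrightarrow> (\<exists>c. ANA_converges_to U F c))"

end

theory Submission
  imports Defs
begin

lemma ent_metric:
  assumes "U = (INF e\<in>{0<..}. principal {(x, y). d x y < (e::real)})"
  shows "entourage U E \<longleftrightarrow> (\<exists>e>0. \<forall>x y. d x y < e \<longrightarrow> (x,y) \<in> E)"
proof -
  have "entourage U E \<longleftrightarrow> (\<exists>b\<in>{0<..}. eventually (\<lambda>p. p \<in> E) (principal {(x, y). d x y < (b::real)}))"
    unfolding entourage_def assms
  proof (rule eventually_INF_base)
    show "{0<..} \<noteq> ({}::real set)" by auto
    fix a b :: real assume "a \<in> {0<..}" "b \<in> {0<..}"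
    then show "\<exists>c\<in>{0<..}. principal {(x, y). d x y < c} \<le> inf (principal {(x, y). d x y < a}) (principal {(x, y). d x y < b})"
      by (intro bexI[of _ "min a b"]) auto
  qed
  also have "\<dots> \<longleftrightarrow> (\<exists>e>0. \<forall>x y. d x y < e \<longrightarrow> (x,y) \<in> E)"
    by (auto simp: eventually_principal)
  finally show ?thesis .
qed

lemma fresh_pair:
  assumes met: "is_metric d" and nd: "\<forall>e>0. \<exists>x y. x \<noteq> y \<and> d x y < (e::real)"
    and "finite F"
  shows "e > 0 \<Longrightarrow> \<exists>x y. x \<noteq> y \<and> x \<notin> F \<and> y \<notin> F \<and> d x y < e"
  using \<open>finite F\<close>
proof (induction F arbitrary: e)
  case empty
  then show ?case using nd by auto
next
  case (insert f F)
  have sym: "\<And>x y. d x y = d y x" and tri: "\<And>x y z. d x z \<le> d x y + d y z"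
    and pos: "\<And>x y. d x y = 0 \<longleftrightarrow> x = y" and nn: "\<And>x y. 0 \<le> d x y"
    using met unfolding is_metric_def by auto
  have split: "(\<exists>x y. x \<noteq> y \<and> x \<notin> insert f F \<and> y \<notin> insert f F \<and> d x y < r) \<or>
      (\<exists>z. z \<noteq> f \<and> z \<notin> F \<and> d f z < r)" if rpos: "r > 0" for r
  proof -
    obtain x y where "x \<noteq> y" "x \<notin> F" "y \<notin> F" "d x y < r" using insert.IH[OF rpos] by blast
    note xy = this
    show ?thesis
    proof (cases "x = f")
      case True then show ?thesis using xy by (intro disjI2 exI[of _ y]) auto
    next
      case False
      show ?thesis
      proof (cases "y = f")
        case True then show ?thesis using xy False sym[of x y] by (intro disjI2 exI[of _ x]) auto
      next
        case False2: False
        then show ?thesis using xy False by (intro disjI1 exI[of _ x] exI[of _ y]) auto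
      qed
    qed
  qed
  have e2: "e/2 > 0" using insert.prems by simp
  show ?case
  proof (cases "\<exists>x y. x \<noteq> y \<and> x \<notin> insert f F \<and> y \<notin> insert f F \<and> d x y < e/2")
    case True then obtain x y where "x \<noteq> y" "x \<notin> insert f F" "y \<notin> insert f F" "d x y < e/2" by blast
    then show ?thesis using e2 by (intro exI[of _ x] exI[of _ y]) auto
  next
    case False
    then obtain z where z: "z \<noteq> f" "z \<notin> F" "d f z < e/2" using split[OF e2] by blast
    have dz: "d f z > 0" using z pos nn by (metis order_le_less)
    have m: "min (e/2) (d f z) > 0" using dz e2 by simp
    show ?thesis
    proof (cases "\<exists>x y. x \<noteq> y \<and> x \<notin> insert f F \<and> y \<notin> insert f F \<and> d x y < min (e/2) (d f z)")
      case True then obtain x y where "x \<noteq> y" "x \<notin> insert f F" "y \<notin> insert f F" "d x y < min (e/2) (d f z)" by blast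
      then show ?thesis using e2 by (intro exI[of _ x] exI[of _ y]) auto
    next
      case False
      then obtain w where w: "w \<noteq> f" "w \<notin> F" "d f w < min (e/2) (d f z)" using split[OF m] by blast
      have "w \<noteq> z" using w by auto
      moreover have "d z w < e"
      proof -
        have "d z w \<le> d z f + d f w" by (rule tri)
        moreover have "d z f = d f z" by (rule sym)
        moreover have "d f w < e/2" using w(3) by simp
        ultimately show ?thesis using z(3) by linarith
      qed
      ultimately show ?thesis using w z by (intro exI[of _ z] exI[of _ w]) auto
    qed
  qed
qed

definition csum :: "'a set \<Rightarrow> ('a \<Rightarrow>\<^sub>0 int) \<Rightarrow> int" where
  "csum A f = sum (poly_mapping.lookup f) (A \<inter> Poly_Mapping.keys f)"

lemma csum_superset:
  assumes "finite K" "Poly_Mapping.keys f \<subseteq> K"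
  shows "csum A f = sum (poly_mapping.lookup f) (A \<inter> K)"
  unfolding csum_def
  by (rule sum.mono_neutral_left) (use assms in \<open>auto simp: in_keys_iff\<close>)

lemma csum_add: "csum A (f + g) = csum A f + csum A g"
proof -
  let ?K = "Poly_Mapping.keys f \<union> Poly_Mapping.keys g"
  have "csum A (f + g) = sum (poly_mapping.lookup (f + g)) (A \<inter> ?K)"
    by (rule csum_superset) (simp_all add: keys_add)
  also have "\<dots> = sum (poly_mapping.lookup f) (A \<inter> ?K) + sum (poly_mapping.lookup g) (A \<inter> ?K)"
    by (simp add: lookup_add sum.distrib)
  also have "\<dots> = csum A f + csum A g"
    using csum_superset[of ?K f A] csum_superset[of ?K g A] by simp
  finally show ?thesis .
qed

lemma csum_diff: "csum A (f - g) = csum A f - csum A g"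
proof -
  let ?K = "Poly_Mapping.keys f \<union> Poly_Mapping.keys g"
  have "csum A (f - g) = sum (poly_mapping.lookup (f - g)) (A \<inter> ?K)"
    by (rule csum_superset) (auto simp: in_keys_iff lookup_minus)
  also have "\<dots> = sum (poly_mapping.lookup f) (A \<inter> ?K) - sum (poly_mapping.lookup g) (A \<inter> ?K)"
    by (simp add: lookup_minus sum_subtractf)
  also have "\<dots> = csum A f - csum A g"
    using csum_superset[of ?K f A] csum_superset[of ?K g A] by simp
  finally show ?thesis .
qed

lemma csum_zero: "csum A 0 = 0"
  by (simp add: csum_def)

lemma csum_gen: "csum A (free_gen x) = (if x \<in> A then 1 else 0)"
  by (auto simp: csum_def free_gen_def lookup_single)

lemma csum_sum: "csum A (\<Sum>k<(n::nat). f k) = (\<Sum>k<n. csum A (f k))"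
  by (induction n) (auto simp: csum_zero csum_add)

lemma csum_nonzero: "csum A f \<noteq> 0 \<Longrightarrow> A \<inter> Poly_Mapping.keys f \<noteq> {}"
  by (auto simp: csum_def)

lemma subgroup_add: "is_subgroup H \<Longrightarrow> a \<in> H \<Longrightarrow> b \<in> H \<Longrightarrow> a + b \<in> H"
  unfolding is_subgroup_def by (metis diff_0 diff_minus_eq_add)


theorem theorem4p21:
  fixes U :: "('a \<times> 'a) filter"
  assumes "uniform_space_on U"
    and "non_archimedean U"
    and "metrizable_uniformity U"
    and "\<not> discrete_uniformity U"
  shows "\<not> ANA_complete U"
proof
  assume compl: "ANA_complete U"
  obtain d where met: "is_metric d" and Ud: "U = (INF e\<in>{0<..}. principal {(x, y). d x y < (e::real)})"
    using assms(3) unfolding metrizable_uniformity_def by blast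
  note ent = ent_metric[OF Ud]
  have sym: "\<And>x y. d x y = d y x" and pos: "\<And>x y. d x y = 0 \<longleftrightarrow> x = y" and nn: "\<And>x y. 0 \<le> d x y"
    using met unfolding is_metric_def by auto
  have nd: "\<forall>e>0. \<exists>x y. x \<noteq> y \<and> d x y < e"
  proof (intro allI impI, rule ccontr)
    fix e :: real assume "e > 0" "\<not> (\<exists>x y. x \<noteq> y \<and> d x y < e)"
    then have "entourage U Id" unfolding ent by auto
    with assms(4) show False by (simp add: discrete_uniformity_def)
  qed
  have eqv: "\<exists>R. equiv UNIV R \<and> entourage U R \<and> (\<forall>x y. (x,y) \<in> R \<longrightarrow> d x y < e)" if "e > 0" for e
  proof -
    have "entourage U {(x,y). d x y < e}" unfolding ent using that by auto
    then obtain R where "equiv UNIV R" "entourage U R" "R \<subseteq> {(x,y). d x y < e}"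
      using assms(2) unfolding non_archimedean_def by blast
    then show ?thesis by blast
  qed
  define S where "S = (\<lambda>P r x y R e. x \<noteq> y \<and> x \<notin> P \<and> y \<notin> P \<and> d x y < r \<and> equiv UNIV R \<and> entourage U R
      \<and> (\<forall>p\<in>insert x (insert y P). \<forall>q\<in>insert x (insert y P). (p,q) \<in> R \<longrightarrow> p = q)
      \<and> e > (0::real) \<and> (\<forall>u v. d u v < e \<longrightarrow> (u,v) \<in> R))"
  have ex: "\<exists>x y R e. S P r x y R e" if fin: "finite P" and rp: "r > 0" for P r
  proof -
    obtain x y where xy: "x \<noteq> y" "x \<notin> P" "y \<notin> P" "d x y < r"
      using fresh_pair[OF met nd fin rp] by blast
    define Q where "Q = insert x (insert y P)"
    define D where "D = (\<lambda>(p,q). d p q) ` {pq \<in> Q \<times> Q. fst pq \<noteq> snd pq}"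
    have finD: "finite D" unfolding D_def Q_def using fin by auto
    have neD: "D \<noteq> {}" unfolding D_def Q_def using xy by auto
    have Dpos: "\<forall>t\<in>D. t > 0" unfolding D_def using pos nn by (auto simp: order_le_less)
    define \<delta> where "\<delta> = Min D"
    have dpos: "\<delta> > 0" unfolding \<delta>_def using Min_in[OF finD neD] Dpos by blast
    have dle: "\<delta> \<le> d p q" if "p \<in> Q" "q \<in> Q" "p \<noteq> q" for p q
    proof -
      have "d p q \<in> D" unfolding D_def using that by force
      then show ?thesis unfolding \<delta>_def using finD by simp
    qed
    obtain R where R: "equiv UNIV R" "entourage U R" "\<forall>x y. (x,y) \<in> R \<longrightarrow> d x y < \<delta>"
      using eqv[OF dpos] by blast
    obtain e where e: "e > 0" "\<forall>u v. d u v < e \<longrightarrow> (u,v) \<in> R" using R(2) unfolding ent by blast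
    have sep: "\<forall>p\<in>Q. \<forall>q\<in>Q. (p,q) \<in> R \<longrightarrow> p = q"
      using R(3) dle by force
    show ?thesis unfolding S_def using xy R e sep unfolding Q_def by blast
  qed
  define G where "G = (\<lambda>P r. SOME t. S P r (fst t) (fst (snd t)) (fst (snd (snd t))) (snd (snd (snd t))))"
  have Gspec: "S P r (fst (G P r)) (fst (snd (G P r))) (fst (snd (snd (G P r)))) (snd (snd (snd (G P r))))"
    if PR: "finite P" "r > 0" for P r
  proof -
    obtain x y R e where "S P r x y R e" using ex[OF PR] by blast
    then have "\<exists>t. S P r (fst t) (fst (snd t)) (fst (snd (snd t))) (snd (snd (snd t)))"
      by (intro exI[of _ "(x,y,R,e)"]) simp
    then show ?thesis unfolding G_def by (rule someI_ex)
  qed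
  define st where "st = rec_nat ({}, 1) (\<lambda>k s. (insert (fst (G (fst s) (snd s))) (insert (fst (snd (G (fst s) (snd s)))) (fst s)),
        min (snd s / 2) (snd (snd (snd (G (fst s) (snd s)))))))"
  define P where "P k = fst (st k)" for k
  define r where "r k = snd (st k)" for k
  define a where "a k = fst (G (P k) (r k))" for k
  define b where "b k = fst (snd (G (P k) (r k)))" for k
  define R where "R k = fst (snd (snd (G (P k) (r k))))" for k
  define e where "e k = snd (snd (snd (G (P k) (r k))))" for k
  have P0: "P 0 = {}" and r0: "r 0 = 1" by (simp_all add: P_def r_def st_def)
  have PS: "P (Suc k) = insert (a k) (insert (b k) (P k))" for k
    by (simp add: P_def r_def st_def a_def b_def)
  have rS: "r (Suc k) = min (r k / 2) (e k)" for k
    by (simp add: P_def r_def st_def e_def)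
  have inv: "finite (P k) \<and> r k > 0" for k
  proof (induction k)
    case 0 then show ?case by (simp add: P0 r0)
  next
    case (Suc k)
    then have "S (P k) (r k) (a k) (b k) (R k) (e k)"
      unfolding a_def b_def R_def e_def by (intro Gspec) auto
    then have "e k > 0" unfolding S_def by blast
    then show ?case using Suc by (simp add: PS rS)
  qed
  have Sk: "S (P k) (r k) (a k) (b k) (R k) (e k)" for k
    unfolding a_def b_def R_def e_def using inv by (intro Gspec) auto
  have ab: "a k \<noteq> b k" "a k \<notin> P k" "b k \<notin> P k" "d (a k) (b k) < r k" "equiv UNIV (R k)" "entourage U (R k)"
    "\<forall>p\<in>P (Suc k). \<forall>q\<in>P (Suc k). (p,q) \<in> R k \<longrightarrow> p = q"
    "e k > 0" "\<forall>u v. d u v < e k \<longrightarrow> (u,v) \<in> R k" for k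
    using Sk[of k] unfolding S_def PS by auto
  have rdec: "r l \<le> r k" if "k \<le> l" for k l
    proof (rule lift_Suc_antimono_le[of r, OF _ that])
    fix n have "0 < r n" using inv by blast
    then show "r (Suc n) \<le> r n" by (simp add: rS min_le_iff_disj)
  qed
  have Pinc: "P k \<subseteq> P l" if "k \<le> l" for k l
    by (rule lift_Suc_mono_le[of P, OF _ that]) (auto simp: PS)
  have rpow: "r k \<le> (1/2)^k" for k
    by (induction k) (auto simp: r0 rS min_le_iff_disj)
  have inR: "(a k, b k) \<in> R j" if "j < k" for j k
  proof -
    have "d (a k) (b k) < r k" by (rule ab(4))
    also have "r k \<le> r (Suc j)" using that by (intro rdec) simp
    also have "r (Suc j) \<le> e j" by (simp add: rS)
    finally show ?thesis using ab(9) by blast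
  qed
  have memP: "a j \<in> P k" "b j \<in> P k" if "j < k" for j k
    using Pinc[of "Suc j" k] that by (auto simp: PS)
  have aa: "a j = a k \<longleftrightarrow> j = k" for j k
    using memP ab(2) by (metis linorder_neqE_nat)
  have ba: "a j \<noteq> b k" for j k
    using memP ab(1,2,3) by (metis linorder_neqE_nat)
  define s where "s n = (\<Sum>k<n. free_gen (a k) - free_gen (b k))" for n
  define F where "F = filtermap s sequentially"
  have cauchy: "ANA_cauchy U F"
    unfolding ANA_cauchy_def
  proof (intro conjI ballI)
    show "F \<noteq> bot" by (simp add: F_def filtermap_bot_iff)
  next
    fix H assume "H \<in> ANA_nbhd_subgroups U"
    then have sg: "is_subgroup H" and "entourage U {(x, y). free_gen x - free_gen y \<in> H}"
      by (auto simp: ANA_nbhd_subgroups_def)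
    then obtain \<epsilon> where eps: "\<epsilon> > 0" "\<forall>x y. d x y < \<epsilon> \<longrightarrow> free_gen x - free_gen y \<in> H"
      unfolding ent by blast
    obtain N where N: "(1/2::real)^N < \<epsilon>" using real_arch_pow_inv[OF eps(1), of "1/2"] by auto
    have trm: "free_gen (a k) - free_gen (b k) \<in> H" if "k \<ge> N" for k
    proof -
      have "d (a k) (b k) < r k" by (rule ab(4))
      also have "r k \<le> r N" using that by (rule rdec)
      also have "r N \<le> (1/2)^N" by (rule rpow)
      finally have "d (a k) (b k) < \<epsilon>" using N by linarith
      then show ?thesis using eps(2) by blast
    qed
    have tail: "s m - s N \<in> H" if "N \<le> m" for m
      using that
    proof (induction m rule: dec_induct)
      case base then show ?case using sg by (simp add: is_subgroup_def)
    next
      case (step m)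
      have eq: "s (Suc m) - s N = (s m - s N) + (free_gen (a m) - free_gen (b m))"
        by (simp add: s_def)
      show ?case unfolding eq by (rule subgroup_add[OF sg step(3) trm[OF step(1)]])
    qed
    have "eventually (\<lambda>(m, n). s n - s m \<in> H) (sequentially \<times>\<^sub>F sequentially)"
      unfolding eventually_prod_sequentially
    proof (intro exI[of _ N] allI impI)
      fix m n assume "N \<le> m" "N \<le> n"
      then have "(s m - s N) - (s n - s N) \<in> H" using tail[of m] tail[of n] sg unfolding is_subgroup_def by blast
      then have "s m - s n \<in> H" by simp
      then show "(\<lambda>(m, n). s n - s m \<in> H) (n, m)" by simp
    qed
    then show "eventually (\<lambda>(x, y). y - x \<in> H) (F \<times>\<^sub>F F)"
      unfolding F_def filtermap_prod_filter[symmetric] eventually_filtermap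
      by (simp add: map_prod_def case_prod_unfold)
  qed
  then obtain c where conv: "ANA_converges_to U F c" using compl unfolding ANA_complete_def by blast
  define M where "M = card (Poly_Mapping.keys c)"
  define A where "A j = R M `` {a j}" for j
  have eqM: "equiv UNIV (R M)" by (rule ab(5))
  have symR: "(y, x) \<in> R M" if "(x, y) \<in> R M" for x y
    using eqM that unfolding equiv_def by (blast dest: symD)
  have trR: "(x, z) \<in> R M" if "(x, y) \<in> R M" "(y, z) \<in> R M" for x y z
    using eqM that unfolding equiv_def by (blast dest: transD)
  have inA: "x \<in> A j \<longleftrightarrow> (a j, x) \<in> R M" for x j by (simp add: A_def)
  have hit: "A j \<inter> Poly_Mapping.keys c \<noteq> {}" if "j \<le> M" for j
  proof -
    define K where "K = {f. csum (A j) f = 0}"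
    have "K \<in> ANA_nbhd_subgroups U"
      unfolding ANA_nbhd_subgroups_def
    proof (intro CollectI conjI)
      show "is_subgroup K" unfolding K_def is_subgroup_def by (simp add: csum_zero csum_diff)
      have "R M \<subseteq> {(x, y). free_gen x - free_gen y \<in> K}"
      proof clarify
        fix x y assume "(x, y) \<in> R M"
        then have "(a j, x) \<in> R M \<longleftrightarrow> (a j, y) \<in> R M"
          by (meson symR trR)
        then show "free_gen x - free_gen y \<in> K"
          unfolding K_def by (simp add: csum_diff csum_gen inA)
      qed
      then show "entourage U {(x, y). free_gen x - free_gen y \<in> K}"
        using ab(6)[of M] unfolding entourage_def by (auto elim: eventually_mono)
    qed
    then have "eventually (\<lambda>n. s n - c \<in> K) sequentially"
      using conv unfolding ANA_converges_to_def F_def eventually_filtermap by blast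
    then obtain N where N: "\<forall>n\<ge>N. csum (A j) (s n) = csum (A j) c"
      unfolding eventually_sequentially K_def by (auto simp: csum_diff)
    define n where "n = max N (Suc M)"
    have "csum (A j) (s n) = (\<Sum>k<n. (if k = j then 1 else 0))"
      unfolding s_def csum_sum
    proof (rule sum.cong[OF refl])
      fix k assume "k \<in> {..<n}"
      show "csum (A j) (free_gen (a k) - free_gen (b k)) = (if k = j then 1 else 0)"
      proof (cases "k \<le> M")
        case True
        have "a j \<in> P (Suc M)" "a k \<in> P (Suc M)" "b k \<in> P (Suc M)"
          using memP[of j "Suc M"] memP[of k "Suc M"] True \<open>j \<le> M\<close> by auto
        note sepM = ab(7)[of M]
        have "(a j, a k) \<in> R M \<longleftrightarrow> j = k"
        proof
          assume "(a j, a k) \<in> R M"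
          then have "a j = a k" using sepM \<open>a j \<in> P (Suc M)\<close> \<open>a k \<in> P (Suc M)\<close> by blast
          then show "j = k" using aa by blast
        next
          assume "j = k"
          then show "(a j, a k) \<in> R M" using eqM unfolding equiv_def refl_on_def by blast
        qed
        moreover have "(a j, b k) \<notin> R M"
        proof
          assume "(a j, b k) \<in> R M"
          then have "a j = b k" using sepM \<open>a j \<in> P (Suc M)\<close> \<open>b k \<in> P (Suc M)\<close> by blast
          then show False using ba by blast
        qed
        ultimately show ?thesis by (auto simp: csum_diff csum_gen inA)
      next
        case False
        then have "(a k, b k) \<in> R M" by (intro inR) simp
        then have "(a j, a k) \<in> R M \<longleftrightarrow> (a j, b k) \<in> R M"
          by (meson symR trR)
        then show ?thesis using False \<open>j \<le> M\<close> by (auto simp: csum_diff csum_gen inA)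
      qed
    qed
    also have "\<dots> = 1" using \<open>j \<le> M\<close> by (simp add: n_def)
    finally have "csum (A j) c = 1" using N by (simp add: n_def)
    then show ?thesis using csum_nonzero by force
  qed
  have disj: "A j \<inter> A j' = {}" if "j \<le> M" "j' \<le> M" "j \<noteq> j'" for j j'
  proof (rule ccontr)
    assume "A j \<inter> A j' \<noteq> {}"
    then obtain x where "(a j, x) \<in> R M" "(a j', x) \<in> R M" by (auto simp: inA)
    then have "(a j, a j') \<in> R M" by (meson symR trR)
    moreover have "a j \<in> P (Suc M)" "a j' \<in> P (Suc M)" using memP that by auto
    ultimately have "a j = a j'" using ab(7)[of M] by blast
    then show False using aa that by blast
  qed
  define f where "f j = (SOME x. x \<in> A j \<inter> Poly_Mapping.keys c)" for j
  have f: "f j \<in> A j \<inter> Poly_Mapping.keys c" if jM: "j \<le> M" for j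
  proof -
    obtain x where "x \<in> A j \<inter> Poly_Mapping.keys c" using hit[OF jM] by blast
    then show ?thesis unfolding f_def by (rule someI[where P="\<lambda>x. x \<in> A j \<inter> Poly_Mapping.keys c"])
  qed
  have "card {..M} \<le> card (Poly_Mapping.keys c)"
  proof (rule card_inj_on_le)
    show "inj_on f {..M}"
      proof (rule inj_onI)
      fix i j assume "i \<in> {..M}" "j \<in> {..M}" "f i = f j"
      then show "i = j" using f[of i] f[of j] disj[of i j] by auto
    qed
    show "f ` {..M} \<subseteq> Poly_Mapping.keys c" using f by auto
    show "finite (Poly_Mapping.keys c)" by simp
  qed
  then show False by (simp add: M_def)
qed

end
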